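(* Let $p\in[2,\infty)$ and let $c_1(p),c_2(p)$ be positive constants such that for every real-valued martingale $(\zeta_j)_{j=0}^n$ with $\zeta_0=0$ and differences $\xi_i:=\zeta_i-\zeta_{i-1}$, \[ \mathsf{E}|\zeta_n|^p\le c_1(p)\sum_{i=1}^n\mathsf{E}|\xi_i|^p+c_2(p)\Big(\sum_{i=1}^n\big\|\mathsf{E}_{i-1}\xi_i^2\big\|_\infty\Big)^{p/2}, \] where $\mathsf{E}_j$ denotes conditional expectation given $\zeta_0,\dots,\zeta_j$. Let $X_1,\dots,X_n$ be independent random vectors in a Banach space $(\mathfrak{X},\|\cdot\|)$, let $Y:=\|X_1+\dots+X_n\|$, and suppose $Y$ has a finite mean. For each $i\in\{1,\dots,n\}$ take any $x_i,y_i\in\mathfrak{X}$. Then \[ \mathsf{E}|Y-\mathsf{E}Y|^p\le C_p\,c_1(p)\sum_{i=1}^n\mathsf{E}\|X_i-x_i\|^p+c_2(p)\Big(\sum_{i=1}^n\mathsf{E}\|X_i-y_i\|^2\Big)^{p/2}, \] where $C_p:=\max_{b\in[0,1]}\big(b^{p-1}+(1-b)^{p-1}\big)\big(b^{\frac1{p-1}}+(1-b)^{\frac1{p-1}}\big)^{p-1}$.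
   Context: $C_p$ as defined in the claim equals the best constant $C$ in $\mathsf{E}|X-\mathsf{E}X|^p\le C\,\mathsf{E}|X|^p$ over all real random variables $X$ with finite mean. The random vectors are assumed measurable so that $Y$ is a random variable (the paper works in a separable Banach space setting). *)

theory Defs
  imports "HOL-Probability.Probability"
begin

definition enn_powr :: "ennreal \<Rightarrow> real \<Rightarrow> ennreal" where
  "enn_powr a q = (if a = \<infinity> then \<infinity> else ennreal (enn2real a powr q))"

definition natural_filtration :: "'a measure \<Rightarrow> (nat \<Rightarrow> 'a \<Rightarrow> real) \<Rightarrow> nat \<Rightarrow> 'a measure" where
  "natural_filtration N \<zeta> j =
     sigma (space N) {\<zeta> i -` A \<inter> space N | i A. i \<le> j \<and> A \<in> sets borel}"

definition real_martingale :: "'a measure \<Rightarrow> nat \<Rightarrow> (nat \<Rightarrow> 'a \<Rightarrow> real) \<Rightarrow> bool" where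
  "real_martingale N m \<zeta> \<longleftrightarrow>
     (\<forall>j\<le>m. \<zeta> j \<in> borel_measurable N \<and> integrable N (\<zeta> j)) \<and>
     (\<forall>j\<in>{1..m}. AE x in N. real_cond_exp N (natural_filtration N \<zeta> (j - 1)) (\<zeta> j) x = \<zeta> (j - 1) x)"

definition C_const :: "real \<Rightarrow> real" where
  "C_const p = (SUP b\<in>{0..1::real}.
      (b powr (p - 1) + (1 - b) powr (p - 1)) *
      (b powr (1 / (p - 1)) + (1 - b) powr (1 / (p - 1))) powr (p - 1))"

end

theory Submission
  imports Defs
begin
lemma powr_ge1_aux: "0 < (s::real) \<Longrightarrow> s \<le> 1 \<Longrightarrow> (e::real) \<le> 0 \<Longrightarrow> s powr e \<ge> 1"
  by (metis powr_mono2' powr_one_eq_one)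

lemma wconv:
  fixes \<alpha> \<beta> s q :: real
  assumes a: "\<alpha> \<ge> 0" "\<beta> \<ge> 0" "0 < s" "s < 1" "q \<ge> 1"
  shows "(\<alpha> + \<beta>) powr q \<le> s powr (1 - q) * \<alpha> powr q + (1 - s) powr (1 - q) * \<beta> powr q"
proof -
  have s1: "s powr (1 - q) \<ge> 1" using a by (intro powr_ge1_aux) auto
  have s2: "(1 - s) powr (1 - q) \<ge> 1" using a by (intro powr_ge1_aux) auto
  show ?thesis
  proof (cases "\<alpha> = 0 \<or> \<beta> = 0")
    case True
    then show ?thesis
    proof
      assume "\<alpha> = 0" then show ?thesis using s2 a
        by (simp add: mult_le_cancel_right1)
    next
      assume "\<beta> = 0" then show ?thesis using s1 a
        by (simp) (metis mult_left_mono[of 1 "s powr (1 - q)" "\<alpha> powr q"] mult_1 powr_ge_zero mult.commute)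
    qed
  next
    case False
    then have ap: "\<alpha> > 0" "\<beta> > 0" using a by auto
    define x where "x = \<alpha> / s"
    define y where "y = \<beta> / (1 - s)"
    have xy: "x > 0" "y > 0" using ap a by (auto simp: x_def y_def)
    have "((1 - s) *\<^sub>R y + s *\<^sub>R x) powr q \<le> (1 - s) * y powr q + s * x powr q"
      using convex_onD[OF powr_convex[OF a(5)], of s y x] xy a by auto
    moreover have "(1 - s) *\<^sub>R y + s *\<^sub>R x = \<alpha> + \<beta>" using a by (simp add: x_def y_def)
    moreover have "(1 - s) * y powr q = (1 - s) powr (1 - q) * \<beta> powr q"
      using a ap by (simp add: y_def powr_divide powr_diff)
    moreover have "s * x powr q = s powr (1 - q) * \<alpha> powr q"
      using a ap by (simp add: x_def powr_divide powr_diff)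
    ultimately show ?thesis by simp
  qed
qed

definition Fq :: "real \<Rightarrow> real \<Rightarrow> real" where
  "Fq q w = (w powr (q - 1) + (1 - w) powr (q - 1)) *
      (w powr (1 / (q - 1)) + (1 - w) powr (1 / (q - 1))) powr (q - 1)"

lemma C_const_Fq: "C_const q = (SUP w\<in>{0..1}. Fq q w)"
  unfolding C_const_def Fq_def by simp

lemma powr_le1_aux: "0 \<le> (w::real) \<Longrightarrow> w \<le> 1 \<Longrightarrow> 0 < e \<Longrightarrow> w powr e \<le> 1"
  by (metis dual_order.order_iff_strict powr01_less_one powr_0 powr_one_eq_one)

lemma Fq_bdd: assumes "q > 1" shows "bdd_above (Fq q ` {0..1})"
proof (rule bdd_aboveI2)
  fix w :: real assume w: "w \<in> {0..1}"
  have e: "q - 1 > 0" "1 / (q - 1) > 0" using assms by auto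
  have A: "w powr (q - 1) + (1 - w) powr (q - 1) \<le> 2"
    using powr_le1_aux[of w "q - 1"] powr_le1_aux[of "1 - w" "q - 1"] w e by auto
  have B: "w powr (1 / (q - 1)) + (1 - w) powr (1 / (q - 1)) \<le> 2"
    using powr_le1_aux[of w "1/(q - 1)"] powr_le1_aux[of "1 - w" "1/(q - 1)"] w e by auto
  have B': "(w powr (1 / (q - 1)) + (1 - w) powr (1 / (q - 1))) powr (q - 1) \<le> 2 powr (q - 1)"
    using B e by (intro powr_mono2) auto
  show "Fq q w \<le> 2 * 2 powr (q - 1)"
    unfolding Fq_def using A B' by (intro mult_mono) auto
qed

lemma Fq_le_C: assumes "q > 1" "0 \<le> w" "w \<le> 1" shows "Fq q w \<le> C_const q"
  unfolding C_const_Fq using assms by (intro cSUP_upper Fq_bdd) auto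

lemma C_ge1: assumes "q > 1" shows "C_const q \<ge> 1"
proof -
  have "Fq q 0 = 1" using assms by (simp add: Fq_def)
  then show ?thesis using Fq_le_C[OF assms, of 0] by simp
qed

lemma two_point:
  fixes q a b :: real
  assumes q: "q \<ge> 2" and ab: "a < 1" "1 < b"
  shows "(\<bar>b - 1\<bar> powr q - C_const q * \<bar>b\<bar> powr q) * (1 - a)
       + (\<bar>a - 1\<bar> powr q - C_const q * \<bar>a\<bar> powr q) * (b - 1) \<le> 0"
proof -
  define C where "C = C_const q"
  define d where "d = b - a"
  define w where "w = (b - 1) / d"
  define r where "r = 1 / (q - 1)"
  have d: "d > 0" using ab by (simp add: d_def)
  have w: "0 < w" "w < 1" using ab d by (auto simp: w_def d_def field_simps)
  have w1: "1 - w = (1 - a) / d" using d by (simp add: w_def d_def field_simps)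
  have r: "r > 0" "r * (q - 1) = 1" using q by (auto simp: r_def)
  define S where "S = w powr r + (1 - w) powr r"
  have S: "S > 0" using w by (simp add: S_def add_pos_pos)
  define s where "s = (1 - w) powr r / S"
  have s1: "1 - s = w powr r / S" using S by (simp add: s_def S_def field_simps)
  have s: "0 < s" "s < 1" using w S by (auto simp: s_def S_def)
  have pinv: "\<And>x::real. x > 0 \<Longrightarrow> x powr (-1) = 1 / x"
    by (simp add: powr_minus_divide)
  have Sp: "\<And>x. x / S powr (1 - q) = x * S powr (q - 1)"
    using S by (simp add: divide_powr_uminus)
  have key1: "w * (1 - w) * s powr (1 - q) = w * S powr (q - 1)"
  proof -
    have "s powr (1 - q) = ((1 - w) powr r) powr (1 - q) / S powr (1 - q)"
      unfolding s_def using S w by (simp add: powr_divide)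
    also have "\<dots> = (1 - w) powr (r * (1 - q)) * S powr (q - 1)"
      by (simp add: powr_powr Sp)
    also have "r * (1 - q) = -1" using r by (simp add: algebra_simps)
    finally show ?thesis using w pinv[of "1 - w"] by simp
  qed
  have key2: "w * (1 - w) * (1 - s) powr (1 - q) = (1 - w) * S powr (q - 1)"
  proof -
    have "(1 - s) powr (1 - q) = (w powr r) powr (1 - q) / S powr (1 - q)"
      unfolding s1 using S w by (simp add: powr_divide)
    also have "\<dots> = w powr (r * (1 - q)) * S powr (q - 1)"
      by (simp add: powr_powr Sp)
    also have "r * (1 - q) = -1" using r by (simp add: algebra_simps)
    finally show ?thesis using w pinv[of w] by simp
  qed
  have conv: "(\<bar>a\<bar> + \<bar>b\<bar>) powr q \<le> s powr (1 - q) * \<bar>a\<bar> powr q + (1 - s) powr (1 - q) * \<bar>b\<bar> powr q"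
    using wconv[of "\<bar>a\<bar>" "\<bar>b\<bar>" s q] s q by auto
  have "d powr q \<le> (\<bar>a\<bar> + \<bar>b\<bar>) powr q"
    using d q by (intro powr_mono2) (auto simp: d_def)
  with conv have "d powr q \<le> s powr (1 - q) * \<bar>a\<bar> powr q + (1 - s) powr (1 - q) * \<bar>b\<bar> powr q"
    by linarith
  then have "w * (1 - w) * d powr q \<le> w * (1 - w) * (s powr (1 - q) * \<bar>a\<bar> powr q + (1 - s) powr (1 - q) * \<bar>b\<bar> powr q)"
    using w by (intro mult_left_mono) auto
  also have "\<dots> = (w * (1 - w) * s powr (1 - q)) * \<bar>a\<bar> powr q + (w * (1 - w) * (1 - s) powr (1 - q)) * \<bar>b\<bar> powr q"
    by (simp add: algebra_simps)
  also have "\<dots> = S powr (q - 1) * (w * \<bar>a\<bar> powr q + (1 - w) * \<bar>b\<bar> powr q)"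
    unfolding key1 key2 by (simp add: algebra_simps)
  finally have star: "w * (1 - w) * d powr q \<le> S powr (q - 1) * (w * \<bar>a\<bar> powr q + (1 - w) * \<bar>b\<bar> powr q)" .
  define G where "G = w powr (q - 1) + (1 - w) powr (q - 1)"
  have G: "G \<ge> 0" by (simp add: G_def)
  have FC: "G * S powr (q - 1) \<le> C"
    using Fq_le_C[of q w] q w by (simp add: Fq_def G_def S_def r_def C_def)
  have nn: "w * \<bar>a\<bar> powr q + (1 - w) * \<bar>b\<bar> powr q \<ge> 0" using w by auto
  have "d * G * (w * (1 - w) * d powr q) \<le> d * G * (S powr (q - 1) * (w * \<bar>a\<bar> powr q + (1 - w) * \<bar>b\<bar> powr q))"
    using star d G by (intro mult_left_mono) auto
  also have "\<dots> = d * ((G * S powr (q - 1)) * (w * \<bar>a\<bar> powr q + (1 - w) * \<bar>b\<bar> powr q))" by simp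
  also have "\<dots> \<le> d * (C * (w * \<bar>a\<bar> powr q + (1 - w) * \<bar>b\<bar> powr q))"
    using FC nn d by (intro mult_left_mono mult_right_mono) auto
  finally have main: "d * G * (w * (1 - w) * d powr q) \<le> d * (C * (w * \<bar>a\<bar> powr q + (1 - w) * \<bar>b\<bar> powr q))" .
  have eb: "\<bar>b - 1\<bar> = w * d" using d w ab by (simp add: w_def)
  have ea: "\<bar>a - 1\<bar> = (1 - w) * d" using d w ab by (simp add: w1)
  have pw: "w powr q = w * w powr (q - 1)" "(1 - w) powr q = (1 - w) * (1 - w) powr (q - 1)"
    using w by (simp_all add: powr_diff)
  have e1: "1 - a = (1 - w) * d" using d by (simp add: w1)
  have e2: "b - 1 = w * d" using d by (simp add: w_def)
  have L: "\<bar>b - 1\<bar> powr q * (1 - a) + \<bar>a - 1\<bar> powr q * (b - 1) = d * G * (w * (1 - w) * d powr q)"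
  proof -
    have "\<bar>b - 1\<bar> powr q * (1 - a) + \<bar>a - 1\<bar> powr q * (b - 1) =
        (w * d) powr q * ((1 - w) * d) + ((1 - w) * d) powr q * (w * d)"
      unfolding eb ea e1 e2 using w d by simp
    also have "\<dots> = (w powr q * d powr q) * ((1 - w) * d) + ((1 - w) powr q * d powr q) * (w * d)"
      using w d by (simp add: powr_mult)
    also have "\<dots> = d * G * (w * (1 - w) * d powr q)"
      unfolding pw G_def by (simp add: algebra_simps)
    finally show ?thesis .
  qed
  have R: "C * \<bar>b\<bar> powr q * (1 - a) + C * \<bar>a\<bar> powr q * (b - 1) = d * (C * (w * \<bar>a\<bar> powr q + (1 - w) * \<bar>b\<bar> powr q))"
    unfolding e1 e2 by (simp add: algebra_simps)
  show ?thesis using main L R unfolding C_def[symmetric] by (simp add: algebra_simps)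
qed

lemma two_point_div:
  fixes q a b :: real
  assumes q: "q \<ge> 2" and ab: "a < 1" "1 < b"
  shows "(\<bar>b - 1\<bar> powr q - C_const q * \<bar>b\<bar> powr q) / (b - 1)
       \<le> (\<bar>a - 1\<bar> powr q - C_const q * \<bar>a\<bar> powr q) / (a - 1)"
proof -
  define hb where "hb = \<bar>b - 1\<bar> powr q - C_const q * \<bar>b\<bar> powr q"
  define ha where "ha = \<bar>a - 1\<bar> powr q - C_const q * \<bar>a\<bar> powr q"
  have "hb * (1 - a) + ha * (b - 1) \<le> 0" using two_point[OF assms] by (simp add: ha_def hb_def)
  then have "hb / (b - 1) \<le> ha / (a - 1)" using ab
    by (simp add: field_simps)
  then show ?thesis by (simp add: ha_def hb_def)
qed

lemma line_exists:
  fixes q :: real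
  assumes q: "q \<ge> 2"
  shows "\<exists>l. \<forall>z. \<bar>z - 1\<bar> powr q - C_const q * \<bar>z\<bar> powr q \<le> l * (z - 1)"
proof -
  define h where "h z = \<bar>z - 1\<bar> powr q - C_const q * \<bar>z\<bar> powr q" for z
  define l where "l = Sup ((\<lambda>b. h b / (b - 1)) ` {1<..})"
  have le: "h b / (b - 1) \<le> h a / (a - 1)" if "a < 1" "1 < b" for a b
    using two_point_div[OF q that] by (simp add: h_def)
  have bdd: "bdd_above ((\<lambda>b. h b / (b - 1)) ` {1<..})"
    by (rule bdd_aboveI2[where M="h 0 / (0 - 1)"]) (use le[of 0] in auto)
  have ne: "{1::real<..} \<noteq> {}" by (auto intro: exI[of _ 2])
  have "h z \<le> l * (z - 1)" for z
  proof (cases z "1::real" rule: linorder_cases)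
    case less
    have "l \<le> h z / (z - 1)" unfolding l_def
      by (rule cSUP_least[OF ne]) (use le less in auto)
    then have "l * (z - 1) \<ge> h z / (z - 1) * (z - 1)" using less
      by (intro mult_right_mono_neg) auto
    then show ?thesis using less by simp
  next
    case equal
    then show ?thesis using C_ge1[of q] q by (simp add: h_def)
  next
    case greater
    have "h z / (z - 1) \<le> l" unfolding l_def
      by (rule cSUP_upper[OF _ bdd]) (use greater in auto)
    then have "h z / (z - 1) * (z - 1) \<le> l * (z - 1)" using greater
      by (intro mult_right_mono) auto
    then show ?thesis using greater by simp
  qed
  then show ?thesis unfolding h_def by blast
qed

lemma pointwise_line:
  fixes q :: real
  assumes q: "q \<ge> 2"
  obtains l where "\<And>z t. \<bar>z - t\<bar> powr q \<le> C_const q * \<bar>z\<bar> powr q + l * sgn t * \<bar>t\<bar> powr (q - 1) * (z - t)"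
proof -
  obtain l where l: "\<And>z. \<bar>z - 1\<bar> powr q - C_const q * \<bar>z\<bar> powr q \<le> l * (z - 1)"
    using line_exists[OF q] by blast
  have C1: "C_const q \<ge> 1" using C_ge1[of q] q by simp
  have pos: "\<bar>z - t\<bar> powr q \<le> C_const q * \<bar>z\<bar> powr q + l * t powr (q - 1) * (z - t)"
    if t: "t > 0" for z t
  proof -
    have "\<bar>z / t - 1\<bar> powr q - C_const q * \<bar>z / t\<bar> powr q \<le> l * (z / t - 1)" by (rule l)
    then have "t powr q * (\<bar>z / t - 1\<bar> powr q - C_const q * \<bar>z / t\<bar> powr q) \<le> t powr q * (l * (z / t - 1))"
      by (intro mult_left_mono) auto
    moreover have "t powr q * \<bar>z / t - 1\<bar> powr q = \<bar>z - t\<bar> powr q"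
    proof -
      have "t powr q * \<bar>z / t - 1\<bar> powr q = (t * \<bar>z / t - 1\<bar>) powr q" using t by (simp add: powr_mult)
      also have "t * \<bar>z / t - 1\<bar> = \<bar>z - t\<bar>" using t
        by (metis abs_of_pos abs_mult diff_divide_distrib divide_self_if less_irrefl nonzero_mult_div_cancel_left times_divide_eq_right right_diff_distrib mult_1_right)
      finally show ?thesis .
    qed
    moreover have "t powr q * \<bar>z / t\<bar> powr q = \<bar>z\<bar> powr q"
      using t by (simp add: powr_mult[symmetric] abs_divide)
    moreover have "t powr q * (l * (z / t - 1)) = l * t powr (q - 1) * (z - t)"
      using t by (simp add: powr_diff field_simps)
    ultimately show ?thesis by (simp add: algebra_simps)
  qed
  have "\<bar>z - t\<bar> powr q \<le> C_const q * \<bar>z\<bar> powr q + l * sgn t * \<bar>t\<bar> powr (q - 1) * (z - t)" for z t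
  proof (cases t "0::real" rule: linorder_cases)
    case less
    have "\<bar>(-z) - (-t)\<bar> powr q \<le> C_const q * \<bar>-z\<bar> powr q + l * (-t) powr (q - 1) * ((-z) - (-t))"
      using pos[of "-t" "-z"] less by simp
    then show ?thesis using less by (simp add: abs_minus_commute algebra_simps)
  next
    case equal
    then show ?thesis using C1 by (simp add: mult_le_cancel_right1)
  next
    case greater
    then show ?thesis using pos[of t z] by simp
  qed
  then show ?thesis using that by blast
qed

lemma (in prob_space) central_moment_bound:
  fixes g :: "'a \<Rightarrow> real" and q :: real
  assumes q: "q \<ge> 2" and g: "integrable M g"
  shows "(\<integral>\<^sup>+ x. ennreal (\<bar>g x - expectation g\<bar> powr q) \<partial>M)
      \<le> ennreal (C_const q) * (\<integral>\<^sup>+ x. ennreal (\<bar>g x\<bar> powr q) \<partial>M)"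
proof (cases "(\<integral>\<^sup>+ x. ennreal (\<bar>g x\<bar> powr q) \<partial>M) = \<infinity>")
  case True
  have "C_const q > 0" using C_ge1[of q] q by simp
  then show ?thesis using True by (simp add: ennreal_mult_top)
next
  case False
  have gm[measurable]: "g \<in> borel_measurable M" using g by auto
  have ip: "integrable M (\<lambda>x. \<bar>g x\<bar> powr q)"
    by (rule integrableI_bounded) (use False in \<open>auto simp: top.not_eq_extremum\<close>)
  obtain l where l: "\<And>z t. \<bar>z - t\<bar> powr q \<le> C_const q * \<bar>z\<bar> powr q + l * sgn t * \<bar>t\<bar> powr (q - 1) * (z - t)"
    using pointwise_line[OF q] by blast
  define m where "m = expectation g"
  define L where "L = l * sgn m * \<bar>m\<bar> powr (q - 1)"
  define k where "k x = C_const q * \<bar>g x\<bar> powr q + L * (g x - m)" for x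
  have ki: "integrable M k" unfolding k_def using ip g by auto
  have kint: "integral\<^sup>L M k = C_const q * integral\<^sup>L M (\<lambda>x. \<bar>g x\<bar> powr q)"
    unfolding k_def using ip g by (simp add: m_def prob_space)
  have kge: "\<bar>g x - m\<bar> powr q \<le> k x" for x unfolding k_def L_def using l[of "g x" m] by simp
  have "(\<integral>\<^sup>+ x. ennreal (\<bar>g x - m\<bar> powr q) \<partial>M) \<le> (\<integral>\<^sup>+ x. ennreal (k x) \<partial>M)"
    by (intro nn_integral_mono ennreal_leI kge)
  also have "\<dots> = ennreal (integral\<^sup>L M k)"
    by (rule nn_integral_eq_integral[OF ki]) (use kge in \<open>auto intro: order.trans[OF powr_ge_zero]\<close>)
  also have "\<dots> = ennreal (C_const q) * ennreal (integral\<^sup>L M (\<lambda>x. \<bar>g x\<bar> powr q))"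
    unfolding kint using C_ge1[of q] q by (simp add: ennreal_mult)
  also have "ennreal (integral\<^sup>L M (\<lambda>x. \<bar>g x\<bar> powr q)) = (\<integral>\<^sup>+ x. ennreal (\<bar>g x\<bar> powr q) \<partial>M)"
    by (rule nn_integral_eq_integral[OF ip, symmetric]) auto
  finally show ?thesis by (simp add: m_def)
qed

context prob_space begin

lemma freeze_nn:
  assumes ind: "indep_var MU U MV V"
    and f[measurable]: "f \<in> borel_measurable (MU \<Otimes>\<^sub>M MV)"
  shows "(\<integral>\<^sup>+ \<omega>. f (U \<omega>, V \<omega>) \<partial>M) = (\<integral>\<^sup>+ \<omega>. \<integral>\<^sup>+ \<omega>'. f (U \<omega>, V \<omega>') \<partial>M \<partial>M)"
proof -
  have rv[measurable]: "U \<in> measurable M MU" "V \<in> measurable M MV"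
    using ind by (auto simp: indep_var_distribution_eq)
  have eq: "distr M MU U \<Otimes>\<^sub>M distr M MV V = distr M (MU \<Otimes>\<^sub>M MV) (\<lambda>x. (U x, V x))"
    using ind by (simp add: indep_var_distribution_eq)
  interpret PV: prob_space "distr M MV V" by (rule prob_space_distr) simp
  have "(\<integral>\<^sup>+ \<omega>. f (U \<omega>, V \<omega>) \<partial>M) = (\<integral>\<^sup>+ z. f z \<partial>distr M (MU \<Otimes>\<^sub>M MV) (\<lambda>x. (U x, V x)))"
    by (simp add: nn_integral_distr)
  also have "\<dots> = (\<integral>\<^sup>+ z. f z \<partial>(distr M MU U \<Otimes>\<^sub>M distr M MV V))" by (simp add: eq)
  also have "\<dots> = (\<integral>\<^sup>+ u. \<integral>\<^sup>+ v. f (u, v) \<partial>distr M MV V \<partial>distr M MU U)"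
    by (rule PV.nn_integral_fst[symmetric]) simp
  also have "\<dots> = (\<integral>\<^sup>+ \<omega>. \<integral>\<^sup>+ v. f (U \<omega>, v) \<partial>distr M MV V \<partial>M)"
    by (rule nn_integral_distr) (auto intro!: PV.borel_measurable_nn_integral_fst)
  also have "\<dots> = (\<integral>\<^sup>+ \<omega>. \<integral>\<^sup>+ \<omega>'. f (U \<omega>, V \<omega>') \<partial>M \<partial>M)"
    by (intro nn_integral_cong nn_integral_distr) auto
  finally show ?thesis .
qed

lemma freeze_int:
  fixes f :: "'u \<times> 'u \<Rightarrow> real"
  assumes ind: "indep_var MU U MV V"
    and f[measurable]: "f \<in> borel_measurable (MU \<Otimes>\<^sub>M MV)"
    and int: "integrable M (\<lambda>\<omega>. f (U \<omega>, V \<omega>))"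
  shows "integrable M (\<lambda>\<omega>. \<integral>\<omega>'. f (U \<omega>, V \<omega>') \<partial>M)"
    and "(\<integral>\<omega>. f (U \<omega>, V \<omega>) \<partial>M) = (\<integral>\<omega>. \<integral>\<omega>'. f (U \<omega>, V \<omega>') \<partial>M \<partial>M)"
proof -
  have rv[measurable]: "U \<in> measurable M MU" "V \<in> measurable M MV"
    using ind by (auto simp: indep_var_distribution_eq)
  have eq: "distr M MU U \<Otimes>\<^sub>M distr M MV V = distr M (MU \<Otimes>\<^sub>M MV) (\<lambda>x. (U x, V x))"
    using ind by (simp add: indep_var_distribution_eq)
  interpret PU: prob_space "distr M MU U" by (rule prob_space_distr) simp
  interpret PV: prob_space "distr M MV V" by (rule prob_space_distr) simp
  interpret P: pair_sigma_finite "distr M MU U" "distr M MV V" ..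
  have fi: "integrable (distr M MU U \<Otimes>\<^sub>M distr M MV V) f"
    unfolding eq using int by (subst integrable_distr_eq) auto
  have inner: "(\<integral>v. f (u, v) \<partial>distr M MV V) = (\<integral>\<omega>'. f (u, V \<omega>') \<partial>M)" if "u \<in> space MU" for u
    using that by (intro integral_distr) auto
  have im: "(\<lambda>u. \<integral>v. f (u, v) \<partial>distr M MV V) \<in> borel_measurable MU"
    using PV.borel_measurable_lebesgue_integral[of "curry f" MU] by simp
  have "integrable (distr M MU U) (\<lambda>u. \<integral>v. f (u, v) \<partial>distr M MV V)"
    by (rule P.integrable_fst'[OF fi])
  then have i1: "integrable M (\<lambda>\<omega>. \<integral>v. f (U \<omega>, v) \<partial>distr M MV V)"
    using im by (subst (asm) integrable_distr_eq) auto
  have eqs: "\<And>\<omega>. \<omega> \<in> space M \<Longrightarrow> (\<integral>v. f (U \<omega>, v) \<partial>distr M MV V) = (\<integral>\<omega>'. f (U \<omega>, V \<omega>') \<partial>M)"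
    using inner measurable_space[OF rv(1)] by auto
  show "integrable M (\<lambda>\<omega>. \<integral>\<omega>'. f (U \<omega>, V \<omega>') \<partial>M)"
    using i1 by (rule Bochner_Integration.integrable_cong[OF refl, THEN iffD1, rotated]) (simp add: eqs)
  have "(\<integral>\<omega>. f (U \<omega>, V \<omega>) \<partial>M) = (\<integral>z. f z \<partial>distr M (MU \<Otimes>\<^sub>M MV) (\<lambda>x. (U x, V x)))"
    by (simp add: integral_distr)
  also have "\<dots> = (\<integral>z. f z \<partial>(distr M MU U \<Otimes>\<^sub>M distr M MV V))" by (simp add: eq)
  also have "\<dots> = (\<integral>u. \<integral>v. f (u, v) \<partial>distr M MV V \<partial>distr M MU U)"
    by (rule P.integral_fst'[OF fi, symmetric])
  also have "\<dots> = (\<integral>\<omega>. \<integral>v. f (U \<omega>, v) \<partial>distr M MV V \<partial>M)"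
    using im by (rule integral_distr[rotated]) simp
  also have "\<dots> = (\<integral>\<omega>. \<integral>\<omega>'. f (U \<omega>, V \<omega>') \<partial>M \<partial>M)"
    by (intro Bochner_Integration.integral_cong refl eqs)
  finally show "(\<integral>\<omega>. f (U \<omega>, V \<omega>) \<partial>M) = (\<integral>\<omega>. \<integral>\<omega>'. f (U \<omega>, V \<omega>') \<partial>M \<partial>M)" .
qed

end

lemma (in prob_space) AE_exists: assumes "AE \<omega> in M. P \<omega>" shows "\<exists>\<omega>\<in>space M. P \<omega>"
proof (rule ccontr)
  assume "\<not> (\<exists>\<omega>\<in>space M. P \<omega>)"
  then have "AE \<omega> in M. False" using assms by (auto elim: AE_mp)
  then show False by simp
qed

locale rsetting = prob_space M for M :: "'a measure" +
  fixes n :: nat and X :: "nat \<Rightarrow> 'a \<Rightarrow> 'b::{banach, second_countable_topology}"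
  assumes Xm[measurable]: "\<And>i. i \<in> {1..n} \<Longrightarrow> X i \<in> borel_measurable M"
    and ind: "indep_vars (\<lambda>_. borel) X {1..n}"
    and Yint: "integrable M (\<lambda>\<omega>. norm (\<Sum>i=1..n. X i \<omega>))"
begin

definition "T j \<omega> = (\<Sum>i=1..j. X i \<omega>)"
definition "R j \<omega> = (\<Sum>i\<in>{Suc j..n}. X i \<omega>)"
definition "mu = expectation (\<lambda>\<omega>. norm (\<Sum>i=1..n. X i \<omega>))"
definition "phi j t = expectation (\<lambda>\<omega>. norm (t + R j \<omega>))"
definition "zeta j \<omega> = phi j (T j \<omega>) - mu"

lemma T_meas[measurable]: "j \<le> n \<Longrightarrow> T j \<in> borel_measurable M"
  unfolding T_def by (intro borel_measurable_sum Xm) auto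

lemma R_meas[measurable]: "R j \<in> borel_measurable M"
  unfolding R_def by (intro borel_measurable_sum Xm) auto

lemma TR: "j \<le> n \<Longrightarrow> T j \<omega> + R j \<omega> = (\<Sum>i=1..n. X i \<omega>)"
proof -
  assume j: "j \<le> n"
  have "{1..n} = {1..j} \<union> {Suc j..n}" using j by auto
  then show ?thesis unfolding T_def R_def
    by (simp add: sum.union_disjoint[symmetric] ivl_disj_int)
qed

lemma sum_restrict: "finite A \<Longrightarrow> (\<Sum>i\<in>A. restrict f A i) = (\<Sum>i\<in>A. f i)"
  by (intro sum.cong) auto

lemma indep_TR: "j \<le> n \<Longrightarrow> indep_var borel (T j) borel (R j)"
proof -
  assume j: "j \<le> n"
  have "indep_var (PiM {1..j} (\<lambda>_. borel)) (\<lambda>\<omega>. restrict (\<lambda>i. X i \<omega>) {1..j})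
                  (PiM {Suc j..n} (\<lambda>_. borel)) (\<lambda>\<omega>. restrict (\<lambda>i. X i \<omega>) {Suc j..n})"
    using j by (intro indep_var_restrict[OF ind]) auto
  then have "indep_var borel ((\<lambda>h. \<Sum>i\<in>{1..j}. h i) \<circ> (\<lambda>\<omega>. restrict (\<lambda>i. X i \<omega>) {1..j}))
                  borel ((\<lambda>h. \<Sum>i\<in>{Suc j..n}. h i) \<circ> (\<lambda>\<omega>. restrict (\<lambda>i. X i \<omega>) {Suc j..n}))"
    by (rule indep_var_compose) auto
  moreover have "((\<lambda>h. \<Sum>i\<in>{1..j}. h i) \<circ> (\<lambda>\<omega>. restrict (\<lambda>i. X i \<omega>) {1..j})) = T j"
    by (auto simp: fun_eq_iff T_def)
  moreover have "((\<lambda>h. \<Sum>i\<in>{Suc j..n}. h i) \<circ> (\<lambda>\<omega>. restrict (\<lambda>i. X i \<omega>) {Suc j..n})) = R j"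
    by (auto simp: fun_eq_iff R_def)
  ultimately show ?thesis by simp
qed

lemma indep_XR: "j \<in> {1..n} \<Longrightarrow> indep_var borel (X j) borel (R j)"
proof -
  assume j: "j \<in> {1..n}"
  have "indep_var (PiM {j} (\<lambda>_. borel)) (\<lambda>\<omega>. restrict (\<lambda>i. X i \<omega>) {j})
                  (PiM {Suc j..n} (\<lambda>_. borel)) (\<lambda>\<omega>. restrict (\<lambda>i. X i \<omega>) {Suc j..n})"
    using j by (intro indep_var_restrict[OF ind]) auto
  then have "indep_var borel ((\<lambda>h. h j) \<circ> (\<lambda>\<omega>. restrict (\<lambda>i. X i \<omega>) {j}))
                  borel ((\<lambda>h. \<Sum>i\<in>{Suc j..n}. h i) \<circ> (\<lambda>\<omega>. restrict (\<lambda>i. X i \<omega>) {Suc j..n}))"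
    by (rule indep_var_compose) auto
  moreover have "((\<lambda>h. h j) \<circ> (\<lambda>\<omega>. restrict (\<lambda>i. X i \<omega>) {j})) = X j"
    by (auto simp: fun_eq_iff)
  moreover have "((\<lambda>h. \<Sum>i\<in>{Suc j..n}. h i) \<circ> (\<lambda>\<omega>. restrict (\<lambda>i. X i \<omega>) {Suc j..n})) = R j"
    by (auto simp: fun_eq_iff R_def)
  ultimately show ?thesis by simp
qed

lemma indep_HV: "j \<in> {1..n} \<Longrightarrow> indep_var (PiM {1..j-1} (\<lambda>_. borel)) (\<lambda>\<omega>. restrict (\<lambda>i. X i \<omega>) {1..j-1})
                  (PiM {j} (\<lambda>_. borel)) (\<lambda>\<omega>. restrict (\<lambda>i. X i \<omega>) {j})"
  by (intro indep_var_restrict[OF ind]) auto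

end

context rsetting begin

lemma Y_nn_fin: "(\<integral>\<^sup>+ \<omega>. ennreal (norm (\<Sum>i=1..n. X i \<omega>)) \<partial>M) < \<infinity>"
  using Yint unfolding integrable_iff_bounded by simp

lemma norm_int: assumes j: "j \<le> n" shows "integrable M (\<lambda>\<omega>. norm (t + R j \<omega>))"
proof -
  have "(\<integral>\<^sup>+ \<omega>. ennreal (norm (T j \<omega> + R j \<omega>)) \<partial>M)
     = (\<integral>\<^sup>+ \<omega>. \<integral>\<^sup>+ \<omega>'. ennreal (norm (T j \<omega> + R j \<omega>')) \<partial>M \<partial>M)"
    using freeze_nn[OF indep_TR[OF j], of "\<lambda>(u, v). ennreal (norm (u + v))"] by simp
  moreover have "(\<integral>\<^sup>+ \<omega>. ennreal (norm (T j \<omega> + R j \<omega>)) \<partial>M) < \<infinity>"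
    using Y_nn_fin by (simp add: TR[OF j])
  ultimately have fin: "(\<integral>\<^sup>+ \<omega>. \<integral>\<^sup>+ \<omega>'. ennreal (norm (T j \<omega> + R j \<omega>')) \<partial>M \<partial>M) \<noteq> \<infinity>" by simp
  have "AE \<omega> in M. (\<integral>\<^sup>+ \<omega>'. ennreal (norm (T j \<omega> + R j \<omega>')) \<partial>M) \<noteq> \<infinity>"
    by (rule nn_integral_PInf_AE[OF _ fin]) (use j in measurable)
  then obtain \<omega>0 where "(\<integral>\<^sup>+ \<omega>'. ennreal (norm (T j \<omega>0 + R j \<omega>')) \<partial>M) \<noteq> \<infinity>"
    using AE_exists by blast
  then have i0: "integrable M (\<lambda>\<omega>'. norm (T j \<omega>0 + R j \<omega>'))"
    by (intro integrableI_bounded) (auto simp: top.not_eq_extremum)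
  show ?thesis
  proof (rule Bochner_Integration.integrable_bound[where f="\<lambda>\<omega>'. norm (t - T j \<omega>0) + norm (T j \<omega>0 + R j \<omega>')"])
    show "integrable M (\<lambda>\<omega>'. norm (t - T j \<omega>0) + norm (T j \<omega>0 + R j \<omega>'))" using i0 by auto
    show "AE x in M. norm (norm (t + R j x)) \<le> norm (norm (t - T j \<omega>0) + norm (T j \<omega>0 + R j x))"
      using norm_triangle_ineq[of "t - T j \<omega>0" "T j \<omega>0 + R j _"] by (auto simp: algebra_simps)
  qed simp
qed

lemma phi_meas[measurable]: "phi j \<in> borel_measurable borel"
  unfolding phi_def by measurable

lemma phi_nonneg: "phi j t \<ge> 0"
  unfolding phi_def by simp

lemma phi_lip: assumes j: "j \<le> n" shows "\<bar>phi j t - phi j s\<bar> \<le> norm (t - s)"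
proof -
  have "phi j t - phi j s = expectation (\<lambda>\<omega>. norm (t + R j \<omega>) - norm (s + R j \<omega>))"
    unfolding phi_def using norm_int[OF j] by simp
  also have "\<bar>\<dots>\<bar> \<le> expectation (\<lambda>\<omega>. \<bar>norm (t + R j \<omega>) - norm (s + R j \<omega>)\<bar>)"
    using integral_norm_bound[of M "\<lambda>\<omega>. norm (t + R j \<omega>) - norm (s + R j \<omega>)"] by simp
  also have "\<dots> \<le> expectation (\<lambda>\<omega>. norm (t - s))"
  proof (rule integral_mono)
    show "integrable M (\<lambda>\<omega>. \<bar>norm (t + R j \<omega>) - norm (s + R j \<omega>)\<bar>)" using norm_int[OF j] by auto
    show "integrable M (\<lambda>\<omega>. norm (t - s))" by simp
    fix \<omega> show "\<bar>norm (t + R j \<omega>) - norm (s + R j \<omega>)\<bar> \<le> norm (t - s)"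
      using norm_triangle_ineq3[of "t + R j \<omega>" "s + R j \<omega>"] by simp
  qed
  also have "\<dots> = norm (t - s)" by (simp add: prob_space)
  finally show ?thesis .
qed

lemma R_pred: "j \<in> {1..n} \<Longrightarrow> R (j - 1) \<omega> = X j \<omega> + R j \<omega>"
proof -
  assume j: "j \<in> {1..n}"
  have "{Suc (j - 1)..n} = insert j {Suc j..n}" using j by auto
  then show ?thesis unfolding R_def by simp
qed

lemma phi_rec: assumes j: "j \<in> {1..n}"
  shows "integrable M (\<lambda>\<omega>. phi j (t + X j \<omega>))" and "phi (j - 1) t = expectation (\<lambda>\<omega>. phi j (t + X j \<omega>))"
proof -
  have int: "integrable M (\<lambda>\<omega>. (\<lambda>(u, v). norm (t + u + v)) (X j \<omega>, R j \<omega>))"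
  proof -
    have "integrable M (\<lambda>\<omega>. norm (t + R (j - 1) \<omega>))" using norm_int[of "j - 1" t] j by auto
    then show ?thesis unfolding R_pred[OF j] by (simp add: add.assoc)
  qed
  note F = freeze_int[OF indep_XR[OF j], of "\<lambda>(u, v). norm (t + u + v)", OF _ int]
  show "integrable M (\<lambda>\<omega>. phi j (t + X j \<omega>))"
    using F(1) j by (simp add: phi_def add.assoc)
  have "phi (j - 1) t = expectation (\<lambda>\<omega>. (\<lambda>(u, v). norm (t + u + v)) (X j \<omega>, R j \<omega>))"
    unfolding phi_def R_pred[OF j] by (simp add: add.assoc)
  also have "\<dots> = expectation (\<lambda>\<omega>. phi j (t + X j \<omega>))"
    using F(2) j by (simp add: phi_def add.assoc)
  finally show "phi (j - 1) t = expectation (\<lambda>\<omega>. phi j (t + X j \<omega>))" .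
qed

lemma zeta_meas[measurable]: "j \<le> n \<Longrightarrow> zeta j \<in> borel_measurable M"
  unfolding zeta_def by measurable

lemma zeta_int: assumes j: "j \<le> n" shows "integrable M (zeta j)"
proof -
  have int: "integrable M (\<lambda>\<omega>. (\<lambda>(u, v). norm (u + v)) (T j \<omega>, R j \<omega>))"
    using Yint by (simp add: TR[OF j])
  note F = freeze_int[OF indep_TR[OF j], of "\<lambda>(u, v). norm (u + v)", OF _ int]
  have "integrable M (\<lambda>\<omega>. phi j (T j \<omega>))" using F(1) by (simp add: phi_def)
  then show ?thesis unfolding zeta_def by simp
qed

lemma zeta0: "zeta 0 \<omega> = 0"
proof -
  have "T 0 \<omega> = 0" by (simp add: T_def)
  moreover have "R 0 \<omega>' = (\<Sum>i=1..n. X i \<omega>')" for \<omega>' by (simp add: R_def)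
  ultimately show ?thesis by (simp add: zeta_def phi_def mu_def)
qed

lemma zetan: "zeta n \<omega> = norm (\<Sum>i=1..n. X i \<omega>) - mu"
proof -
  have "R n \<omega>' = 0" for \<omega>' by (simp add: R_def)
  then have "phi n t = norm t" for t by (simp add: phi_def prob_space)
  then show ?thesis by (simp add: zeta_def T_def)
qed

end

context rsetting begin

definition "H j \<omega> = restrict (\<lambda>i. X i \<omega>) {1..j}"
definition "PH j = PiM {1..j} (\<lambda>_. borel :: 'b measure)"
definition "G k = {zeta i -` A \<inter> space M | i A. i \<le> k \<and> A \<in> sets borel}"

lemma H_meas[measurable]: "j \<le> n \<Longrightarrow> H j \<in> measurable M (PH j)"
  unfolding H_def PH_def by (intro measurable_restrict) auto

lemma sumH: "i \<le> k \<Longrightarrow> (\<Sum>l=1..i. H k \<omega> l) = T i \<omega>"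
  unfolding H_def T_def by (intro sum.cong) auto

lemma sumH': "i \<le> k \<Longrightarrow> sum (H k \<omega>) {Suc 0..i} = T i \<omega>"
  using sumH[of i k \<omega>] by simp

lemma gen_meas: "i \<le> k \<Longrightarrow> (\<lambda>h. phi i (\<Sum>l=1..i. h l) - mu) \<in> borel_measurable (PH k)"
proof -
  assume ik: "i \<le> k"
  have "(\<lambda>h. \<Sum>l=1..i. h l) \<in> borel_measurable (PH k)"
    unfolding PH_def using ik by (intro borel_measurable_sum measurable_component_singleton) auto
  then show ?thesis by measurable
qed

lemma G_Pow: "G k \<subseteq> Pow (space M)" unfolding G_def by auto

lemma nf_eq: "natural_filtration M zeta k = sigma (space M) (G k)"
  unfolding natural_filtration_def G_def ..

lemma nf_space[simp]: "space (natural_filtration M zeta k) = space M"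
  unfolding nf_eq by (simp add: space_measure_of[OF G_Pow])

lemma nf_sets: "sets (natural_filtration M zeta k) = sigma_sets (space M) (G k)"
  unfolding nf_eq by (simp add: sets_measure_of[OF G_Pow])

lemma nf_sub_H: assumes k: "k \<le> n"
  shows "sets (natural_filtration M zeta k) \<subseteq> sets (vimage_algebra (space M) (H k) (PH k))"
proof -
  interpret V: sigma_algebra "space M" "sets (vimage_algebra (space M) (H k) (PH k))"
    using sets.sigma_algebra_axioms[of "vimage_algebra (space M) (H k) (PH k)"] by simp
  have "G k \<subseteq> sets (vimage_algebra (space M) (H k) (PH k))"
  proof
    fix S assume "S \<in> G k"
    then obtain i A where S: "S = zeta i -` A \<inter> space M" "i \<le> k" "A \<in> sets borel"
      unfolding G_def by auto
    let ?g = "\<lambda>h. phi i (\<Sum>l=1..i. h l) - mu"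
    have "?g -` A \<inter> space (PH k) \<in> sets (PH k)"
      using gen_meas[OF S(2)] S(3) by (rule measurable_sets)
    then have "H k -` (?g -` A \<inter> space (PH k)) \<inter> space M \<in> sets (vimage_algebra (space M) (H k) (PH k))"
      by (rule in_vimage_algebra)
    moreover have "H k -` (?g -` A \<inter> space (PH k)) \<inter> space M = S"
      using S(1,2) measurable_space[OF H_meas[OF k]] by (auto simp: sumH' zeta_def)
    ultimately show "S \<in> sets (vimage_algebra (space M) (H k) (PH k))" by simp
  qed
  then show ?thesis unfolding nf_sets by (rule V.sigma_sets_subset)
qed

lemma nf_subset_H: assumes k: "k \<le> n" "A \<in> sets (natural_filtration M zeta k)"
  obtains B where "B \<in> sets (PH k)" "A = H k -` B \<inter> space M"
proof -
  have "A \<in> sets (vimage_algebra (space M) (H k) (PH k))" using nf_sub_H[OF k(1)] k(2) by auto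
  moreover have "H k \<in> space M \<rightarrow> space (PH k)" using measurable_space[OF H_meas[OF k(1)]] by auto
  ultimately show ?thesis using that by (auto simp: sets_vimage_algebra2)
qed

lemma nf_sub_M: assumes k: "k \<le> n" shows "sets (natural_filtration M zeta k) \<subseteq> sets M"
proof -
  have "G k \<subseteq> sets M" unfolding G_def using k by auto
  then show ?thesis unfolding nf_sets by (rule sets.sigma_sets_subset)
qed

lemma zeta_nf_meas: assumes k: "k \<le> n" shows "zeta k \<in> borel_measurable (natural_filtration M zeta k)"
proof (rule measurableI)
  fix A :: "real set" assume "A \<in> sets borel"
  then have "zeta k -` A \<inter> space M \<in> G k" unfolding G_def by auto
  then show "zeta k -` A \<inter> space (natural_filtration M zeta k) \<in> sets (natural_filtration M zeta k)"
    unfolding nf_sets by auto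
qed simp

lemma nf_subalg: "k \<le> n \<Longrightarrow> finite_measure_subalgebra M (natural_filtration M zeta k)"
  by unfold_locales (auto simp: subalgebra_def nf_sub_M)

end

context rsetting begin

definition "V j \<omega> = restrict (\<lambda>i. X i \<omega>) {j}"
definition "PV j = PiM {j} (\<lambda>_. borel :: 'b measure)"

lemma sum_PH_meas[measurable]: "(\<lambda>h. \<Sum>l=1..k. h l) \<in> borel_measurable (PH k)"
  unfolding PH_def by (intro borel_measurable_sum measurable_component_singleton) auto

lemma comp_PV_meas[measurable]: "(\<lambda>h. h j) \<in> borel_measurable (PV j)"
  unfolding PV_def by (intro measurable_component_singleton) auto

lemma V_j[simp]: "V j \<omega> j = X j \<omega>" by (simp add: V_def)

lemma sumH_self[simp]: "(\<Sum>l=1..k. H k \<omega> l) = T k \<omega>" by (rule sumH) simp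
lemma sumH_self'[simp]: "sum (H k \<omega>) {Suc 0..k} = T k \<omega>" by (rule sumH') simp

lemma indep_HV': "j \<in> {1..n} \<Longrightarrow> indep_var (PH (j - 1)) (H (j - 1)) (PV j) (V j)"
  unfolding H_def PH_def V_def PV_def using indep_HV by simp

lemma T_suc: "j \<in> {1..n} \<Longrightarrow> T j \<omega> = T (j - 1) \<omega> + X j \<omega>"
proof -
  assume j: "j \<in> {1..n}"
  then obtain k where k: "j = Suc k" by (cases j) auto
  show ?thesis unfolding T_def k by simp
qed

lemma indep_HV_Suc: "k < n \<Longrightarrow> indep_var (PH k) (H k) (PV (Suc k)) (V (Suc k))"
  using indep_HV'[of "Suc k"] by simp

lemma T_Suc: "k < n \<Longrightarrow> T (Suc k) \<omega> = T k \<omega> + X (Suc k) \<omega>"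
  using T_suc[of "Suc k"] by simp

lemma phi_rec_Suc: assumes "k < n"
  shows "integrable M (\<lambda>\<omega>. phi (Suc k) (t + X (Suc k) \<omega>))"
    and "phi k t = expectation (\<lambda>\<omega>. phi (Suc k) (t + X (Suc k) \<omega>))"
  using phi_rec[of "Suc k" t] assms by auto

lemma martingale_step:
  assumes k: "k < n" and A: "A \<in> sets (natural_filtration M zeta k)"
  shows "(\<integral>\<omega>\<in>A. zeta (Suc k) \<omega> \<partial>M) = (\<integral>\<omega>\<in>A. zeta k \<omega> \<partial>M)"
proof -
  have jn: "k \<le> n" "Suc k \<le> n" using k by auto
  obtain B where B[measurable]: "B \<in> sets (PH k)" and AB: "A = H k -` B \<inter> space M"
    using nf_subset_H[OF jn(1) A] by blast
  have AM[measurable]: "A \<in> sets M" using nf_sub_M[OF jn(1)] A by auto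
  have indA: "indicator B (H k \<omega>) = indicator A \<omega>" if "\<omega> \<in> space M" for \<omega>
    using that by (simp add: AB indicator_def)
  define f where "f = (\<lambda>(h, h'). indicator B h * (phi (Suc k) ((\<Sum>l=1..k. h l) + h' (Suc k)) - mu) :: real)"
  have fm: "f \<in> borel_measurable (PH k \<Otimes>\<^sub>M PV (Suc k))" unfolding f_def by measurable
  have fe: "f (H k \<omega>, V (Suc k) \<omega>) = indicator A \<omega> * zeta (Suc k) \<omega>" if "\<omega> \<in> space M" for \<omega>
    using that by (simp add: f_def indA zeta_def T_Suc[OF k])
  have fint: "integrable M (\<lambda>\<omega>. f (H k \<omega>, V (Suc k) \<omega>))"
    using integrable_mult_indicator[OF AM zeta_int[OF jn(2)]]
    by (rule Bochner_Integration.integrable_cong[OF refl, THEN iffD1, rotated]) (simp add: fe)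
  note F = freeze_int[OF indep_HV_Suc[OF k] fm fint]
  have inner: "(\<integral>\<omega>'. f (H k \<omega>, V (Suc k) \<omega>') \<partial>M) = indicator A \<omega> * zeta k \<omega>"
    if "\<omega> \<in> space M" for \<omega>
  proof -
    have "(\<integral>\<omega>'. f (H k \<omega>, V (Suc k) \<omega>') \<partial>M)
        = (\<integral>\<omega>'. indicator A \<omega> * (phi (Suc k) (T k \<omega> + X (Suc k) \<omega>') - mu) \<partial>M)"
      using that by (simp add: f_def indA)
    also have "\<dots> = indicator A \<omega> * (expectation (\<lambda>\<omega>'. phi (Suc k) (T k \<omega> + X (Suc k) \<omega>')) - mu)"
      using phi_rec_Suc(1)[OF k] by (simp add: prob_space)
    also have "\<dots> = indicator A \<omega> * zeta k \<omega>"
      using phi_rec_Suc(2)[OF k] by (simp add: zeta_def)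
    finally show ?thesis .
  qed
  have "(\<integral>\<omega>\<in>A. zeta (Suc k) \<omega> \<partial>M) = (\<integral>\<omega>. f (H k \<omega>, V (Suc k) \<omega>) \<partial>M)"
    unfolding set_lebesgue_integral_def by (intro Bochner_Integration.integral_cong) (simp_all add: fe)
  also have "\<dots> = (\<integral>\<omega>. \<integral>\<omega>'. f (H k \<omega>, V (Suc k) \<omega>') \<partial>M \<partial>M)" by (rule F(2))
  also have "\<dots> = (\<integral>\<omega>\<in>A. zeta k \<omega> \<partial>M)"
    unfolding set_lebesgue_integral_def by (intro Bochner_Integration.integral_cong) (simp_all add: inner)
  finally show ?thesis .
qed

lemma martingale: "real_martingale M n zeta"
  unfolding real_martingale_def
proof safe
  fix j assume "j \<le> n"
  then show "zeta j \<in> borel_measurable M" "integrable M (zeta j)" by (auto intro: zeta_int)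
next
  fix j assume j: "j \<in> {1..n}"
  then obtain k where k: "j = Suc k" "k < n" by (cases j) auto
  interpret F: finite_measure_subalgebra M "natural_filtration M zeta k" by (rule nf_subalg) (use k in auto)
  have "AE x in M. real_cond_exp M (natural_filtration M zeta k) (zeta (Suc k)) x = zeta k x"
    by (rule F.real_cond_exp_charact)
       (use k in \<open>auto intro: martingale_step zeta_int zeta_nf_meas\<close>)
  then show "AE x in M. real_cond_exp M (natural_filtration M zeta (j - 1)) (zeta j) x = zeta (j - 1) x"
    using k by simp
qed

end

lemma C_const_2: "C_const 2 = 1"
proof -
  have "Fq 2 w = 1" if "w \<in> {0..1}" for w using that by (simp add: Fq_def)
  then have "(SUP w\<in>{0..1}. Fq 2 w) = (SUP w\<in>{0..1::real}. 1)" by (intro SUP_cong) auto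
  then show ?thesis unfolding C_const_Fq by simp
qed

lemma abs_powr2: "\<bar>x::real\<bar> powr 2 = x\<^sup>2"
  by (cases "x = 0") (auto simp: powr_realpow)

context rsetting begin

lemma inner_bound:
  assumes k: "k < n" and q: "q \<ge> 2"
  shows "(\<integral>\<^sup>+ \<omega>'. ennreal (\<bar>phi (Suc k) (t + X (Suc k) \<omega>') - phi k t\<bar> powr q) \<partial>M)
       \<le> ennreal (C_const q) * (\<integral>\<^sup>+ \<omega>'. ennreal (norm (X (Suc k) \<omega>' - z) powr q) \<partial>M)"
proof -
  define g where "g \<omega>' = phi (Suc k) (t + X (Suc k) \<omega>') - phi (Suc k) (t + z)" for \<omega>'
  have gi: "integrable M g" unfolding g_def using phi_rec_Suc(1)[OF k] by simp
  have Eg: "expectation g = phi k t - phi (Suc k) (t + z)"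
    unfolding g_def using phi_rec_Suc[OF k, of t] by (simp add: prob_space)
  have "(\<integral>\<^sup>+ \<omega>'. ennreal (\<bar>phi (Suc k) (t + X (Suc k) \<omega>') - phi k t\<bar> powr q) \<partial>M)
      = (\<integral>\<^sup>+ \<omega>'. ennreal (\<bar>g \<omega>' - expectation g\<bar> powr q) \<partial>M)"
    by (simp add: Eg g_def)
  also have "\<dots> \<le> ennreal (C_const q) * (\<integral>\<^sup>+ \<omega>'. ennreal (\<bar>g \<omega>'\<bar> powr q) \<partial>M)"
    by (rule central_moment_bound[OF q gi])
  also have "(\<integral>\<^sup>+ \<omega>'. ennreal (\<bar>g \<omega>'\<bar> powr q) \<partial>M) \<le> (\<integral>\<^sup>+ \<omega>'. ennreal (norm (X (Suc k) \<omega>' - z) powr q) \<partial>M)"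
  proof (intro nn_integral_mono ennreal_leI powr_mono2)
    fix \<omega>' show "\<bar>g \<omega>'\<bar> \<le> norm (X (Suc k) \<omega>' - z)"
      using phi_lip[of "Suc k" "t + X (Suc k) \<omega>'" "t + z"] k by (simp add: g_def)
  qed (use q in auto)
  finally show ?thesis by (simp add: mult_left_mono)
qed

lemma freeze_H:
  assumes k: "k < n" and f[measurable]: "f \<in> borel_measurable (PH k \<Otimes>\<^sub>M PV (Suc k))"
  shows "(\<integral>\<^sup>+ \<omega>. f (H k \<omega>, V (Suc k) \<omega>) \<partial>M) = (\<integral>\<^sup>+ \<omega>. \<integral>\<^sup>+ \<omega>'. f (H k \<omega>, V (Suc k) \<omega>') \<partial>M \<partial>M)"
  by (rule freeze_nn[OF indep_HV_Suc[OF k] f])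

lemma moment_bound:
  assumes k: "k < n" and q: "q \<ge> 2"
  shows "(\<integral>\<^sup>+ \<omega>. ennreal (\<bar>zeta (Suc k) \<omega> - zeta k \<omega>\<bar> powr q) \<partial>M)
       \<le> ennreal (C_const q) * (\<integral>\<^sup>+ \<omega>'. ennreal (norm (X (Suc k) \<omega>' - z) powr q) \<partial>M)"
proof -
  define f where "f = (\<lambda>(h, h'). ennreal (\<bar>phi (Suc k) ((\<Sum>l=1..k. h l) + h' (Suc k)) - phi k (\<Sum>l=1..k. h l)\<bar> powr q))"
  have fm: "f \<in> borel_measurable (PH k \<Otimes>\<^sub>M PV (Suc k))" unfolding f_def by measurable
  have "(\<integral>\<^sup>+ \<omega>. ennreal (\<bar>zeta (Suc k) \<omega> - zeta k \<omega>\<bar> powr q) \<partial>M) = (\<integral>\<^sup>+ \<omega>. f (H k \<omega>, V (Suc k) \<omega>) \<partial>M)"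
    by (simp add: f_def zeta_def T_Suc[OF k])
  also have "\<dots> = (\<integral>\<^sup>+ \<omega>. \<integral>\<^sup>+ \<omega>'. f (H k \<omega>, V (Suc k) \<omega>') \<partial>M \<partial>M)" by (rule freeze_H[OF k fm])
  also have "\<dots> \<le> (\<integral>\<^sup>+ \<omega>. ennreal (C_const q) * (\<integral>\<^sup>+ \<omega>'. ennreal (norm (X (Suc k) \<omega>' - z) powr q) \<partial>M) \<partial>M)"
    by (intro nn_integral_mono) (simp add: f_def inner_bound[OF k q])
  also have "\<dots> = ennreal (C_const q) * (\<integral>\<^sup>+ \<omega>'. ennreal (norm (X (Suc k) \<omega>' - z) powr q) \<partial>M)"
    by (simp add: emeasure_space_1)
  finally show ?thesis .
qed

lemma var_bound_set:
  assumes k: "k < n" and A: "A \<in> sets (natural_filtration M zeta k)"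
  shows "(\<integral>\<^sup>+ \<omega>. indicator A \<omega> * ennreal ((zeta (Suc k) \<omega> - zeta k \<omega>)\<^sup>2) \<partial>M)
       \<le> (\<integral>\<^sup>+ \<omega>'. ennreal (norm (X (Suc k) \<omega>' - z) powr 2) \<partial>M) * emeasure M A"
proof -
  have jn: "k \<le> n" using k by auto
  obtain B where B[measurable]: "B \<in> sets (PH k)" and AB: "A = H k -` B \<inter> space M"
    using nf_subset_H[OF jn A] by blast
  have AM[measurable]: "A \<in> sets M" using nf_sub_M[OF jn] A by auto
  have indA: "indicator B (H k \<omega>) = indicator A \<omega>" if "\<omega> \<in> space M" for \<omega>
    using that by (simp add: AB indicator_def)
  have XSk[measurable]: "X (Suc k) \<in> borel_measurable M" using k by (intro Xm) auto
  have TK[measurable]: "T k \<in> borel_measurable M" using k by (intro T_meas) auto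
  define E where "E = (\<integral>\<^sup>+ \<omega>'. ennreal (norm (X (Suc k) \<omega>' - z) powr 2) \<partial>M)"
  define f where "f = (\<lambda>(h, h'). indicator B h * ennreal (\<bar>phi (Suc k) ((\<Sum>l=1..k. h l) + h' (Suc k)) - phi k (\<Sum>l=1..k. h l)\<bar> powr 2))"
  have fm: "f \<in> borel_measurable (PH k \<Otimes>\<^sub>M PV (Suc k))" unfolding f_def by measurable
  have "(\<integral>\<^sup>+ \<omega>. indicator A \<omega> * ennreal ((zeta (Suc k) \<omega> - zeta k \<omega>)\<^sup>2) \<partial>M) = (\<integral>\<^sup>+ \<omega>. f (H k \<omega>, V (Suc k) \<omega>) \<partial>M)"
    by (intro nn_integral_cong) (simp add: f_def zeta_def T_Suc[OF k] indA abs_powr2)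
  also have "\<dots> = (\<integral>\<^sup>+ \<omega>. \<integral>\<^sup>+ \<omega>'. f (H k \<omega>, V (Suc k) \<omega>') \<partial>M \<partial>M)" by (rule freeze_H[OF k fm])
  also have "\<dots> \<le> (\<integral>\<^sup>+ \<omega>. indicator A \<omega> * E \<partial>M)"
  proof (intro nn_integral_mono)
    fix \<omega> assume \<omega>: "\<omega> \<in> space M"
    have [measurable]: "(\<lambda>\<omega>'. ennreal ((phi (Suc k) (T k \<omega> + X (Suc k) \<omega>') - phi k (T k \<omega>))\<^sup>2)) \<in> borel_measurable M"
      by measurable
    have "(\<integral>\<^sup>+ \<omega>'. f (H k \<omega>, V (Suc k) \<omega>') \<partial>M)
        = indicator A \<omega> * (\<integral>\<^sup>+ \<omega>'. ennreal (\<bar>phi (Suc k) (T k \<omega> + X (Suc k) \<omega>') - phi k (T k \<omega>)\<bar> powr 2) \<partial>M)"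
      using \<omega> by (simp add: f_def indA nn_integral_cmult)
    also have "\<dots> \<le> indicator A \<omega> * E"
    proof (intro mult_left_mono)
      show "(\<integral>\<^sup>+ \<omega>'. ennreal (\<bar>phi (Suc k) (T k \<omega> + X (Suc k) \<omega>') - phi k (T k \<omega>)\<bar> powr 2) \<partial>M) \<le> E"
        using inner_bound[OF k, of 2 "T k \<omega>" z] by (simp add: C_const_2 E_def)
    qed simp
    finally show "(\<integral>\<^sup>+ \<omega>'. f (H k \<omega>, V (Suc k) \<omega>') \<partial>M) \<le> indicator A \<omega> * E" .
  qed
  also have "\<dots> = E * emeasure M A" by (simp add: nn_integral_cmult_indicator mult.commute)
  finally show ?thesis unfolding E_def .
qed

end

context rsetting begin

lemma esssup_bound:
  assumes k: "k < n"
  shows "esssup M (nn_cond_exp M (natural_filtration M zeta k) (\<lambda>\<omega>. ennreal ((zeta (Suc k) \<omega> - zeta k \<omega>)\<^sup>2)))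
       \<le> (\<integral>\<^sup>+ \<omega>'. ennreal (norm (X (Suc k) \<omega>' - z) powr 2) \<partial>M)"
proof -
  define Fk where "Fk = natural_filtration M zeta k"
  interpret F: finite_measure_subalgebra M Fk unfolding Fk_def by (rule nf_subalg) (use k in auto)
  define E where "E = (\<integral>\<^sup>+ \<omega>'. ennreal (norm (X (Suc k) \<omega>' - z) powr 2) \<partial>M)"
  define g where "g \<omega> = ennreal ((zeta (Suc k) \<omega> - zeta k \<omega>)\<^sup>2)" for \<omega>
  have gm[measurable]: "g \<in> borel_measurable M" unfolding g_def
  proof -
    have [measurable]: "zeta k \<in> borel_measurable M" "zeta (Suc k) \<in> borel_measurable M"
      using k by (auto intro: zeta_meas)
    show "(\<lambda>\<omega>. ennreal ((zeta (Suc k) \<omega> - zeta k \<omega>)\<^sup>2)) \<in> borel_measurable M" by measurable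
  qed
  define c where "c = nn_cond_exp M Fk g"
  have cF[measurable]: "c \<in> borel_measurable Fk" unfolding c_def by simp
  have cM[measurable]: "c \<in> borel_measurable M" unfolding c_def by simp
  have "AE \<omega> in M. c \<omega> \<le> E"
  proof (cases "E = \<infinity>")
    case True then show ?thesis by simp
  next
    case False
    define S where "S = {\<omega> \<in> space M. E < c \<omega>}"
    have spF: "space Fk = space M" unfolding Fk_def by simp
    have SF: "S \<in> sets Fk"
    proof -
      have "{\<omega> \<in> space Fk. E < c \<omega>} \<in> sets Fk" by measurable
      then show ?thesis by (simp add: S_def spF)
    qed
    have SM[measurable]: "S \<in> sets M" unfolding S_def by measurable
    have indF: "indicator S \<in> borel_measurable Fk" using SF by simp
    have "(\<integral>\<^sup>+ \<omega>. indicator S \<omega> * c \<omega> \<partial>M) = (\<integral>\<^sup>+ \<omega>. indicator S \<omega> * g \<omega> \<partial>M)"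
      unfolding c_def by (rule F.nn_cond_exp_intg[OF indF gm])
    also have "\<dots> \<le> E * emeasure M S"
      unfolding g_def E_def using var_bound_set[OF k SF[unfolded Fk_def]] by simp
    finally have up: "(\<integral>\<^sup>+ \<omega>. indicator S \<omega> * c \<omega> \<partial>M) \<le> E * emeasure M S" .
    have "(\<integral>\<^sup>+ \<omega>. indicator S \<omega> * c \<omega> \<partial>M)
        = (\<integral>\<^sup>+ \<omega>. indicator S \<omega> * E + indicator S \<omega> * (c \<omega> - E) \<partial>M)"
    proof (intro nn_integral_cong)
      fix \<omega> assume "\<omega> \<in> space M"
      have "E < c \<omega> \<Longrightarrow> c \<omega> = E + (c \<omega> - E)"
      proof -
        assume "E < c \<omega>"
        then show ?thesis by (metis add_diff_inverse_ennreal less_imp_le)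
      qed
      then show "indicator S \<omega> * c \<omega> = indicator S \<omega> * E + indicator S \<omega> * (c \<omega> - E)"
        by (auto simp: S_def indicator_def)
    qed
    also have "\<dots> = (\<integral>\<^sup>+ \<omega>. indicator S \<omega> * E \<partial>M) + (\<integral>\<^sup>+ \<omega>. indicator S \<omega> * (c \<omega> - E) \<partial>M)"
      by (rule nn_integral_add) auto
    also have "(\<integral>\<^sup>+ \<omega>. indicator S \<omega> * E \<partial>M) = E * emeasure M S"
      by (simp add: nn_integral_cmult_indicator mult.commute)
    finally have "E * emeasure M S + (\<integral>\<^sup>+ \<omega>. indicator S \<omega> * (c \<omega> - E) \<partial>M) \<le> E * emeasure M S"
      using up by simp
    moreover have "E * emeasure M S \<noteq> \<infinity>"
      using False by (simp add: ennreal_mult_eq_top_iff emeasure_eq_measure)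
    ultimately have "(\<integral>\<^sup>+ \<omega>. indicator S \<omega> * (c \<omega> - E) \<partial>M) = 0" by simp
    then have "AE \<omega> in M. indicator S \<omega> * (c \<omega> - E) = 0"
      by (subst (asm) nn_integral_0_iff_AE) auto
    then show ?thesis using AE_space
    proof eventually_elim
      fix \<omega> assume h: "indicator S \<omega> * (c \<omega> - E) = 0" "\<omega> \<in> space M"
      show "c \<omega> \<le> E"
      proof (rule ccontr)
        assume "\<not> c \<omega> \<le> E"
        then have lt: "E < c \<omega>" by simp
        then have "\<omega> \<in> S" using h(2) by (simp add: S_def)
        then have "c \<omega> - E = 0" using h(1) by simp
        moreover have "c \<omega> - E > 0" using lt by (simp add: diff_gr0_ennreal)
        ultimately show False by simp
      qed
    qed
  qed
  then have "esssup M c \<le> E" by (intro esssup_I) auto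
  then show ?thesis unfolding c_def g_def Fk_def E_def .
qed

end

lemma enn_powr_mono: assumes "a \<le> b" "0 \<le> q" shows "enn_powr a q \<le> enn_powr b q"
proof (cases "b = \<infinity>")
  case True then show ?thesis by (simp add: enn_powr_def)
next
  case False
  then have "a \<noteq> \<infinity>" using assms(1) by (auto simp: top_unique)
  then show ?thesis using False assms
    by (auto simp: enn_powr_def intro!: ennreal_leI powr_mono2 enn2real_mono simp: less_top)
qed

theorem corollary3p2:
  fixes p c1 c2 :: real
    and M :: "'a measure"
    and n :: nat
    and X :: "nat \<Rightarrow> 'a \<Rightarrow> 'b::{banach, second_countable_topology}"
    and x y :: "nat \<Rightarrow> 'b"
  assumes p: "2 \<le> p"
    and c1: "0 < c1" and c2: "0 < c2"
    and rosenthal: "\<And>(N :: 'a measure) (m :: nat) (\<zeta> :: nat \<Rightarrow> 'a \<Rightarrow> real).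
        prob_space N \<Longrightarrow> real_martingale N m \<zeta> \<Longrightarrow> (\<forall>\<omega>\<in>space N. \<zeta> 0 \<omega> = 0) \<Longrightarrow>
        (\<integral>\<^sup>+ \<omega>. ennreal (\<bar>\<zeta> m \<omega>\<bar> powr p) \<partial>N)
          \<le> ennreal c1 * (\<Sum>i=1..m. \<integral>\<^sup>+ \<omega>. ennreal (\<bar>\<zeta> i \<omega> - \<zeta> (i - 1) \<omega>\<bar> powr p) \<partial>N)
            + ennreal c2 * enn_powr
                (\<Sum>i=1..m. esssup N (nn_cond_exp N (natural_filtration N \<zeta> (i - 1))
                    (\<lambda>\<omega>. ennreal ((\<zeta> i \<omega> - \<zeta> (i - 1) \<omega>)\<^sup>2))))
                (p / 2)"
    and M: "prob_space M"
    and Xmeas: "\<And>i. i \<in> {1..n} \<Longrightarrow> X i \<in> borel_measurable M"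
    and indep: "prob_space.indep_vars M (\<lambda>_. borel) X {1..n}"
    and Yint: "integrable M (\<lambda>\<omega>. norm (\<Sum>i=1..n. X i \<omega>))"
  shows "(\<integral>\<^sup>+ \<omega>. ennreal (\<bar>norm (\<Sum>i=1..n. X i \<omega>)
                    - prob_space.expectation M (\<lambda>\<omega>'. norm (\<Sum>i=1..n. X i \<omega>'))\<bar> powr p) \<partial>M)
     \<le> ennreal (C_const p * c1) * (\<Sum>i=1..n. \<integral>\<^sup>+ \<omega>. ennreal (norm (X i \<omega> - x i) powr p) \<partial>M)
       + ennreal c2 * enn_powr (\<Sum>i=1..n. \<integral>\<^sup>+ \<omega>. ennreal ((norm (X i \<omega> - y i))\<^sup>2) \<partial>M) (p / 2)"
  proof -
  interpret rsetting M n X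
    by (rule rsetting.intro[OF M rsetting_axioms.intro]) (use Xmeas indep Yint in auto)
  have R: "(\<integral>\<^sup>+ \<omega>. ennreal (\<bar>zeta n \<omega>\<bar> powr p) \<partial>M)
          \<le> ennreal c1 * (\<Sum>i=1..n. \<integral>\<^sup>+ \<omega>. ennreal (\<bar>zeta i \<omega> - zeta (i - 1) \<omega>\<bar> powr p) \<partial>M)
            + ennreal c2 * enn_powr
                (\<Sum>i=1..n. esssup M (nn_cond_exp M (natural_filtration M zeta (i - 1))
                    (\<lambda>\<omega>. ennreal ((zeta i \<omega> - zeta (i - 1) \<omega>)\<^sup>2))))
                (p / 2)"
    by (rule rosenthal[OF M martingale]) (simp add: zeta0)
  have L: "(\<integral>\<^sup>+ \<omega>. ennreal (\<bar>norm (\<Sum>i=1..n. X i \<omega>)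
                    - prob_space.expectation M (\<lambda>\<omega>'. norm (\<Sum>i=1..n. X i \<omega>'))\<bar> powr p) \<partial>M)
         = (\<integral>\<^sup>+ \<omega>. ennreal (\<bar>zeta n \<omega>\<bar> powr p) \<partial>M)"
    by (simp add: zetan mu_def)
  have A: "(\<Sum>i=1..n. \<integral>\<^sup>+ \<omega>. ennreal (\<bar>zeta i \<omega> - zeta (i - 1) \<omega>\<bar> powr p) \<partial>M)
      \<le> ennreal (C_const p) * (\<Sum>i=1..n. \<integral>\<^sup>+ \<omega>. ennreal (norm (X i \<omega> - x i) powr p) \<partial>M)"
    unfolding sum_distrib_left
  proof (intro sum_mono)
    fix i assume i: "i \<in> {1..n}"
    then obtain k where k: "i = Suc k" "k < n" by (cases i) auto
    show "(\<integral>\<^sup>+ \<omega>. ennreal (\<bar>zeta i \<omega> - zeta (i - 1) \<omega>\<bar> powr p) \<partial>M)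
        \<le> ennreal (C_const p) * (\<integral>\<^sup>+ \<omega>. ennreal (norm (X i \<omega> - x i) powr p) \<partial>M)"
      using moment_bound[OF k(2) p, of "x i"] k(1) by simp
  qed
  have B: "(\<Sum>i=1..n. esssup M (nn_cond_exp M (natural_filtration M zeta (i - 1))
                    (\<lambda>\<omega>. ennreal ((zeta i \<omega> - zeta (i - 1) \<omega>)\<^sup>2))))
      \<le> (\<Sum>i=1..n. \<integral>\<^sup>+ \<omega>. ennreal ((norm (X i \<omega> - y i))\<^sup>2) \<partial>M)"
  proof (intro sum_mono)
    fix i assume i: "i \<in> {1..n}"
    then obtain k where k: "i = Suc k" "k < n" by (cases i) auto
    have "\<And>\<omega>. norm (X i \<omega> - y i) powr 2 = (norm (X i \<omega> - y i))\<^sup>2"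
      using abs_powr2 by (metis abs_norm_cancel)
    then show "esssup M (nn_cond_exp M (natural_filtration M zeta (i - 1))
                    (\<lambda>\<omega>. ennreal ((zeta i \<omega> - zeta (i - 1) \<omega>)\<^sup>2)))
        \<le> (\<integral>\<^sup>+ \<omega>. ennreal ((norm (X i \<omega> - y i))\<^sup>2) \<partial>M)"
      using esssup_bound[OF k(2), of "y i"] k(1) by simp
  qed
  have C0: "C_const p \<ge> 0" using C_ge1[of p] p by simp
  have "ennreal c1 * (\<Sum>i=1..n. \<integral>\<^sup>+ \<omega>. ennreal (\<bar>zeta i \<omega> - zeta (i - 1) \<omega>\<bar> powr p) \<partial>M)
      \<le> ennreal c1 * (ennreal (C_const p) * (\<Sum>i=1..n. \<integral>\<^sup>+ \<omega>. ennreal (norm (X i \<omega> - x i) powr p) \<partial>M))"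
    using A by (rule mult_left_mono) simp
  also have "\<dots> = ennreal (C_const p * c1) * (\<Sum>i=1..n. \<integral>\<^sup>+ \<omega>. ennreal (norm (X i \<omega> - x i) powr p) \<partial>M)"
    using C0 c1 by (simp add: ennreal_mult mult_ac)
  finally have A': "ennreal c1 * (\<Sum>i=1..n. \<integral>\<^sup>+ \<omega>. ennreal (\<bar>zeta i \<omega> - zeta (i - 1) \<omega>\<bar> powr p) \<partial>M)
      \<le> ennreal (C_const p * c1) * (\<Sum>i=1..n. \<integral>\<^sup>+ \<omega>. ennreal (norm (X i \<omega> - x i) powr p) \<partial>M)" .
  have B': "ennreal c2 * enn_powr
                (\<Sum>i=1..n. esssup M (nn_cond_exp M (natural_filtration M zeta (i - 1))
                    (\<lambda>\<omega>. ennreal ((zeta i \<omega> - zeta (i - 1) \<omega>)\<^sup>2))))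
                (p / 2)
      \<le> ennreal c2 * enn_powr (\<Sum>i=1..n. \<integral>\<^sup>+ \<omega>. ennreal ((norm (X i \<omega> - y i))\<^sup>2) \<partial>M) (p / 2)"
    by (intro mult_left_mono enn_powr_mono[OF B]) (use p in auto)
  show ?thesis unfolding L using order.trans[OF R add_mono[OF A' B']] .
qed

end
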